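(* Let $R>0$ and $d\in\mathbb{N}$ be such that $R-x\in\mathcal Q((1-x^2)^3)_d$. Then for every $k\in\mathbb{N}$ we have $R-x^k,\ R+x^k\in\mathcal Q((1-x^2)^3)_{dk}$ and $R-T_k(x),\ R+T_k(x)\in\mathcal Q((1-x^2)^3)_{dk}$.
   Context: For univariate polynomials, $\Sigma[x]_m$ is the cone of sums of squares of degree at most $m$, and $\mathcal Q((1-x^2)^3)_m=\Sigma[x]_m+(1-x^2)^3\Sigma[x]_{m-6}$. $T_k(x)=\cos(k\arccos x)$ is the Chebyshev polynomial of the first kind. *)

theory Defs
  imports "HOL-Computational_Algebra.Polynomial" Complex_Main
begin

text \<open>Sigma[x]_m: sums of squares of real univariate polynomials of degree at most m.
  The index is an integer so that for m < 0 the cone is {0}.\<close>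
definition sos_cone :: "int \<Rightarrow> real poly set" where
  "sos_cone m = {p. \<exists>qs. p = sum_list (map (\<lambda>q. q ^ 2) qs) \<and>
                         (\<forall>q\<in>set qs. 2 * int (degree q) \<le> m)}"

definition qmod_cube :: "int \<Rightarrow> real poly set" where
  "qmod_cube m = {s0 + ([:1, 0, -1:]) ^ 3 * s1 | s0 s1. s0 \<in> sos_cone m \<and> s1 \<in> sos_cone (m - 6)}"

fun cheb :: "nat \<Rightarrow> real poly" where
  "cheb 0 = 1"
| "cheb (Suc 0) = [:0, 1:]"
| "cheb (Suc (Suc n)) = [:0, 2:] * cheb (Suc n) - cheb n"

end

theory Submission
  imports Defs
begin

lemma sos_zero: "0 \<in> sos_cone m"
  unfolding sos_cone_def by (rule CollectI, rule exI[of _ "[]"]) simp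

lemma sos_add: "p \<in> sos_cone m \<Longrightarrow> q \<in> sos_cone m \<Longrightarrow> p + q \<in> sos_cone m"
  unfolding sos_cone_def
proof safe
  fix ps qs :: "real poly list"
  assume "\<forall>q\<in>set ps. 2 * int (degree q) \<le> m" "\<forall>q\<in>set qs. 2 * int (degree q) \<le> m"
  then show "\<exists>rs. sum_list (map (\<lambda>q. q ^ 2) ps) + sum_list (map (\<lambda>q. q ^ 2) qs)
      = sum_list (map (\<lambda>q. q ^ 2) rs) \<and> (\<forall>q\<in>set rs. 2 * int (degree q) \<le> m)"
    by (intro exI[of _ "ps @ qs"]) auto
qed

lemma sos_sq_mult:
  assumes "2 * int (degree a) \<le> m1" "q \<in> sos_cone m2"
  shows "a^2 * q \<in> sos_cone (m1 + m2)"
proof -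
  obtain qs where q: "q = sum_list (map (\<lambda>q. q ^ 2) qs)" "\<forall>q\<in>set qs. 2 * int (degree q) \<le> m2"
    using assms(2) unfolding sos_cone_def by auto
  have e: "a^2 * sum_list (map (\<lambda>q. q ^ 2) qs) = sum_list (map (\<lambda>q. q ^ 2) (map (\<lambda>b. a*b) qs))"
    by (induction qs) (auto simp: algebra_simps power_mult_distrib)
  have "\<forall>b\<in>set (map (\<lambda>b. a*b) qs). 2 * int (degree b) \<le> m1 + m2"
  proof
    fix b assume "b \<in> set (map (\<lambda>b. a*b) qs)"
    then obtain c where c: "c \<in> set qs" "b = a * c" by auto
    have "degree b \<le> degree a + degree c" using c degree_mult_le by metis
    then show "2 * int (degree b) \<le> m1 + m2" using q(2) c assms(1) by fastforce
  qed
  then show ?thesis unfolding sos_cone_def using q(1) e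
    by (intro CollectI exI[of _ "map (\<lambda>b. a*b) qs"]) (simp del: map_map)
qed

lemma sos_mult:
  assumes "p \<in> sos_cone m1" "q \<in> sos_cone m2"
  shows "p * q \<in> sos_cone (m1 + m2)"
proof -
  obtain ps where p: "p = sum_list (map (\<lambda>q. q ^ 2) ps)" "\<forall>q\<in>set ps. 2 * int (degree q) \<le> m1"
    using assms(1) unfolding sos_cone_def by auto
  have "\<forall>q\<in>set ps. 2 * int (degree q) \<le> m1 \<Longrightarrow> sum_list (map (\<lambda>q. q ^ 2) ps) * q \<in> sos_cone (m1 + m2)"
  proof (induction ps)
    case Nil then show ?case by (simp add: sos_zero)
  next
    case (Cons a ps)
    then show ?case by (simp add: distrib_right sos_add sos_sq_mult assms(2))
  qed
  then show ?thesis using p by simp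
qed

lemma pcompose_power: "pcompose (p ^ n) r = (pcompose p r) ^ n"
  by (induction n) (simp_all add: pcompose_1 pcompose_mult)

lemma pcompose_sum_sq: "pcompose (sum_list (map (\<lambda>q. q ^ 2) qs)) r
   = sum_list (map (\<lambda>q. q ^ 2) (map (\<lambda>q. pcompose q r) qs))"
  by (induction qs) (simp_all add: pcompose_add pcompose_power)

lemma sos_comp:
  assumes "p \<in> sos_cone m" "degree r \<le> k"
  shows "pcompose p r \<in> sos_cone (int k * m)"
proof -
  obtain ps where p: "p = sum_list (map (\<lambda>q. q ^ 2) ps)" "\<forall>q\<in>set ps. 2 * int (degree q) \<le> m"
    using assms(1) unfolding sos_cone_def by auto
  have "\<forall>b\<in>set (map (\<lambda>q. pcompose q r) ps). 2 * int (degree b) \<le> int k * m"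
  proof
    fix b assume "b \<in> set (map (\<lambda>q. pcompose q r) ps)"
    then obtain c where c: "c \<in> set ps" "b = pcompose c r" by auto
    have d: "degree b = degree c * degree r" using c degree_pcompose by metis
    have h: "2 * int (degree c) \<le> m" using p(2) c by auto
    have "2 * int (degree c) * int (degree r) \<le> m * int k"
      by (rule mult_mono) (use h assms(2) in auto)
    then show "2 * int (degree b) \<le> int k * m" using d by (simp add: algebra_simps)
  qed
  then show ?thesis unfolding sos_cone_def using p(1) pcompose_sum_sq
    by (intro CollectI exI[of _ "map (\<lambda>q. pcompose q r) ps"]) (simp del: map_map)
qed

lemma sos_nonneg: "p \<in> sos_cone m \<Longrightarrow> poly p x \<ge> 0"
proof -
  assume "p \<in> sos_cone m"
  then obtain ps where p: "p = sum_list (map (\<lambda>q. q ^ 2) ps)"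
    unfolding sos_cone_def by auto
  have "poly (sum_list (map (\<lambda>q. q ^ 2) ps)) x \<ge> 0"
    by (induction ps) auto
  then show ?thesis using p by simp
qed

abbreviation gg :: "real poly" where "gg \<equiv> [:1, 0, -1:]"

lemma qmod_comp:
  assumes "f \<in> qmod_cube (int d)" "degree p \<le> k" "k \<ge> 1"
    "pcompose (gg ^ 3) p = gg ^ 3 * h" "h \<in> sos_cone (6 * int k - 6)"
  shows "pcompose f p \<in> qmod_cube (int (d * k))"
proof -
  obtain s0 s1 where s: "f = s0 + gg ^ 3 * s1" "s0 \<in> sos_cone (int d)" "s1 \<in> sos_cone (int d - 6)"
    using assms(1) unfolding qmod_cube_def by auto
  have "pcompose f p = pcompose s0 p + gg ^ 3 * (h * pcompose s1 p)"
    using s(1) assms(4) by (simp add: pcompose_add pcompose_mult mult.assoc)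
  moreover have "pcompose s0 p \<in> sos_cone (int (d * k))"
    using sos_comp[OF s(2) assms(2)] by (simp add: mult.commute)
  moreover have "h * pcompose s1 p \<in> sos_cone ((6 * int k - 6) + int k * (int d - 6))"
    by (rule sos_mult[OF assms(5) sos_comp[OF s(3) assms(2)]])
  moreover have "(6 * int k - 6) + int k * (int d - 6) = int (d * k) - 6"
    by (simp add: algebra_simps)
  ultimately show ?thesis unfolding qmod_cube_def by auto
qed

lemma gg_comp: "pcompose gg p = 1 - p^2"
  by (simp add: pcompose_pCons power2_eq_square algebra_simps)

lemma gg_eq: "gg = 1 - [:0,1:]^2"
  by (simp add: power2_eq_square one_pCons)


lemma sos_sq: "2 * int (degree q) \<le> m \<Longrightarrow> q^2 \<in> sos_cone m"
  unfolding sos_cone_def by (intro CollectI exI[of _ "[q]"]) simp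

lemma neg_comp: "pcompose (gg ^ 3) (-p) = pcompose (gg ^ 3) p"
  by (simp add: pcompose_power gg_comp)

lemma lin_comp: "pcompose [:R, -1:] p = [:R:] - (p::real poly)"
  by (simp add: pcompose_pCons)

fun cu :: "nat \<Rightarrow> real poly" where
  "cu 0 = 0"
| "cu (Suc 0) = 1"
| "cu (Suc (Suc n)) = [:0, 2:] * cu (Suc n) - cu n"

lemma two_X: "[:0, 2:] = 2 * [:0, 1::real:]"
  by (simp add: numeral_poly)

lemma pell:
  defines "X \<equiv> [:0, 1::real:]"
  shows "cheb n ^ 2 - (X^2 - 1) * cu n ^ 2 = 1 \<and>
         cheb (Suc n) ^ 2 - (X^2 - 1) * cu (Suc n) ^ 2 = 1 \<and>
         cheb (Suc n) * cheb n - (X^2 - 1) * cu (Suc n) * cu n = X"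
proof (induction n)
  case 0
  then show ?case by (simp add: X_def)
next
  case (Suc n)
  define a where "a = cheb (Suc n)"
  define b where "b = cheb n"
  define c where "c = cu (Suc n)"
  define e where "e = cu n"
  have h1: "a^2 - (X^2-1)*c^2 = 1" "b^2 - (X^2-1)*e^2 = 1" "a*b - (X^2-1)*c*e = X"
    using Suc unfolding a_def b_def c_def e_def by auto
  have t: "cheb (Suc (Suc n)) = 2*X*a - b" "cu (Suc (Suc n)) = 2*X*c - e"
    unfolding a_def b_def c_def e_def X_def by (simp_all add: two_X)
  have "(2*X*a - b)^2 - (X^2-1)*(2*X*c-e)^2
     = 4*X^2*(a^2 - (X^2-1)*c^2) - 4*X*(a*b - (X^2-1)*c*e) + (b^2 - (X^2-1)*e^2)"
    by (simp add: power2_eq_square algebra_simps)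
  also have "\<dots> = 1" using h1 by (simp add: power2_eq_square algebra_simps)
  finally have g1: "(2*X*a - b)^2 - (X^2-1)*(2*X*c-e)^2 = 1" .
  have "(2*X*a - b)*a - (X^2-1)*(2*X*c-e)*c
     = 2*X*(a^2 - (X^2-1)*c^2) - (a*b - (X^2-1)*c*e)"
    by (simp add: power2_eq_square algebra_simps)
  also have "\<dots> = X" using h1 by simp
  finally have g2: "(2*X*a - b)*a - (X^2-1)*(2*X*c-e)*c = X" .
  show ?case using g1 g2 h1 t unfolding a_def c_def by simp
qed

lemma deg_cheb: "degree (cheb n) \<le> n"
proof (induction n rule: cheb.induct)
  case (3 n)
  have "degree ([:0, 2:] * cheb (Suc n)) \<le> Suc (Suc n)"
    using degree_mult_le[of "[:0, 2:]" "cheb (Suc n)"] 3 by simp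
  then show ?case using degree_diff_le[of _ "Suc (Suc n)" "cheb n"] 3 by simp
qed simp_all

lemma deg_cu: "degree (cu n) \<le> n - 1"
proof (induction n rule: cu.induct)
  case (3 n)
  have "degree ([:0, 2:] * cu (Suc n)) \<le> Suc n"
    using degree_mult_le[of "[:0, 2:]" "cu (Suc n)"] 3 by simp
  then show ?case using degree_diff_le[of _ "Suc n" "cu n"] 3 by simp
qed simp_all

lemma cheb_comp: "pcompose (gg ^ 3) (cheb k) = gg ^ 3 * (cu k ^ 3)^2"
proof -
  have "1 - cheb k ^ 2 = gg * cu k ^ 2"
    using pell[of k] by (simp add: gg_eq algebra_simps)
  have g: "\<And>a b :: real poly. (a*b^2)^3 = a^3*(b^3)^2"
    by (simp add: power_mult_distrib flip: power_mult)
  have "pcompose (gg^3) (cheb k) = (1 - cheb k^2)^3" by (simp only: pcompose_power gg_comp)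
  also have "\<dots> = (gg * cu k ^ 2)^3" by (simp only: \<open>1 - cheb k ^ 2 = gg * cu k ^ 2\<close>)
  also have "\<dots> = gg^3 * (cu k ^ 3)^2" by (rule g)
  finally show ?thesis .
qed

lemma cheb_h: "k \<ge> 1 \<Longrightarrow> (cu k ^ 3)^2 \<in> sos_cone (6 * int k - 6)"
proof (rule sos_sq)
  assume "k \<ge> 1"
  have "degree (cu k ^ 3) \<le> 3 * degree (cu k)" by (metis degree_power_le mult.commute)
  then show "2 * int (degree (cu k ^ 3)) \<le> 6 * int k - 6"
    using deg_cu[of k] \<open>k \<ge> 1\<close> by linarith
qed

definition S :: "nat \<Rightarrow> real poly" where
  "S k = sum_list (map (\<lambda>i. (monom 1 i)^2) [0..<k])"

lemma S_id: "gg * S k = 1 - (monom 1 k)^2"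
  by (induction k) (simp_all add: S_def monom_altdef gg_eq algebra_simps power2_eq_square power_add flip: power_add)

lemma S_sos: "k \<ge> 1 \<Longrightarrow> S k \<in> sos_cone (2 * int k - 2)"
  unfolding S_def sos_cone_def
  by (intro CollectI exI[of _ "map (\<lambda>i. monom 1 i) [0..<k]"]) (auto simp: degree_monom_eq o_def)

lemma monom_comp: "pcompose (gg ^ 3) (monom 1 k) = gg ^ 3 * (S k * (S k * S k))"
proof -
  have g: "\<And>a b :: real poly. (a*b)^3 = a^3*(b*(b*b))"
    by (simp add: power_mult_distrib power3_eq_cube)
  have "pcompose (gg^3) (monom 1 k) = (1 - (monom 1 k)^2)^3" by (simp only: pcompose_power gg_comp)
  also have "\<dots> = (gg * S k)^3" by (simp only: S_id)
  also have "\<dots> = gg^3 * (S k * (S k * S k))" by (rule g)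
  finally show ?thesis .
qed

lemma monom_h: "k \<ge> 1 \<Longrightarrow> S k * (S k * S k) \<in> sos_cone (6 * int k - 6)"
  using sos_mult[OF S_sos S_sos] sos_mult[OF S_sos sos_mult[OF S_sos S_sos]]
  by (smt (verit))

theorem lemma16:
  fixes R :: real and d :: nat
  assumes "R > 0"
    and "[:R, -1:] \<in> qmod_cube (int d)"
  shows "\<forall>k::nat.
           [:R:] - monom 1 k \<in> qmod_cube (int (d * k)) \<and>
           [:R:] + monom 1 k \<in> qmod_cube (int (d * k)) \<and>
           [:R:] - cheb k \<in> qmod_cube (int (d * k)) \<and>
           [:R:] + cheb k \<in> qmod_cube (int (d * k))"
proof
  fix k :: nat
  show "[:R:] - monom 1 k \<in> qmod_cube (int (d * k)) \<and>
           [:R:] + monom 1 k \<in> qmod_cube (int (d * k)) \<and>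
           [:R:] - cheb k \<in> qmod_cube (int (d * k)) \<and>
           [:R:] + cheb k \<in> qmod_cube (int (d * k))"
  proof (cases "k = 0")
    case True
    obtain s0 s1 where s: "[:R, -1:] = s0 + gg ^ 3 * s1" "s0 \<in> sos_cone (int d)"
      using assms(2) unfolding qmod_cube_def by auto
    have "poly [:R, -1:] 1 = poly s0 1" using s(1) by simp
    then have R1: "R \<ge> 1" using sos_nonneg[OF s(2), of 1] by simp
    have sq: "\<And>a::real. [:a:]^2 = [:a^2:]" by (simp add: power2_eq_square)
    have m: "[:R:] - 1 = [:sqrt (R - 1):]^2" "[:R:] + 1 = [:sqrt (R + 1):]^2"
      using R1 by (simp_all only: sq real_sqrt_pow2, simp_all add: one_pCons)
    have q: "\<And>a. [:a:]^2 \<in> qmod_cube 0"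
    proof -
      fix a :: real
      have "[:a:]^2 = [:a:]^2 + gg^3 * 0" by simp
      moreover have "[:a:]^2 \<in> sos_cone 0" by (rule sos_sq) simp
      ultimately show "[:a:]^2 \<in> qmod_cube 0" unfolding qmod_cube_def using sos_zero by blast
    qed
    have "[:R:] - 1 \<in> qmod_cube 0" "[:R:] + 1 \<in> qmod_cube 0"
      unfolding m by (rule q)+
    then show ?thesis using True by simp
  next
    case False
    then have k1: "k \<ge> 1" by simp
    have dm: "degree (monom 1 k :: real poly) \<le> k" "degree (- monom 1 k :: real poly) \<le> k"
      by (simp_all add: degree_monom_eq)
    have dc: "degree (- cheb k) \<le> k" using deg_cheb[of k] by simp
    have A: "pcompose [:R, -1:] (monom 1 k) \<in> qmod_cube (int (d * k))"
      by (rule qmod_comp[OF assms(2) dm(1) k1 monom_comp monom_h[OF k1]])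
    have B: "pcompose [:R, -1:] (- monom 1 k) \<in> qmod_cube (int (d * k))"
      by (rule qmod_comp[OF assms(2) dm(2) k1 _ monom_h[OF k1]]) (simp add: neg_comp monom_comp)
    have C: "pcompose [:R, -1:] (cheb k) \<in> qmod_cube (int (d * k))"
      by (rule qmod_comp[OF assms(2) deg_cheb k1 cheb_comp cheb_h[OF k1]])
    have D: "pcompose [:R, -1:] (- cheb k) \<in> qmod_cube (int (d * k))"
      by (rule qmod_comp[OF assms(2) dc k1 _ cheb_h[OF k1]]) (simp add: neg_comp cheb_comp)
    show ?thesis using A B C D by (simp add: lin_comp)
  qed
qed

end
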